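(* Let $\mathcal{A}$ be a class of continuous nondecreasing functions $\mathbb{R}\to\mathbb{R}$ such that for every compact $K\subset\mathbb{R}$, every continuous nondecreasing $h:K\to\mathbb{R}$ and every $\eta>0$ there is $\alpha\in\mathcal{A}$ with $\sup_{x\in K}|h(x)-\alpha(x)|<\eta$. Let $F:[0,1]^d\to\mathbb{R}$ be of the form $F(\boldsymbol{x})=\sum_{i=1}^N\psi_i(\boldsymbol{a}_i^\top\boldsymbol{x}+b_i)$ with $\boldsymbol{a}_i\in\mathbb{R}^d$, $b_i\in\mathbb{R}$ and each $\psi_i\in C^1(\mathbb{R})$ convex. Then for every $\epsilon>0$ there exist $M\ge1$, $\boldsymbol{W}\in\mathbb{R}^{M\times d}$, $\boldsymbol{c}\in\mathbb{R}^M$, $\boldsymbol{b}\in\mathbb{R}^d$ and $\sigma_1,\dots,\sigma_M\in\mathcal{A}$ such that, with $\sigma(\boldsymbol{z})=(\sigma_1(z_1),\dots,\sigma_M(z_M))$, $$\sup_{\boldsymbol{x}\in[0,1]^d}\|\nabla F(\boldsymbol{x})-(\boldsymbol{W}^\top\sigma(\boldsymbol{W}\boldsymbol{x}+\boldsymbol{c})+\boldsymbol{b})\|<\epsilon,$$ and each such approximator is the gradient of a convex function on $\mathbb{R}^d$.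
   Context: $C^1(\mathbb{R})$ denotes continuously differentiable real functions on $\mathbb{R}$. $\|\cdot\|$ is the Euclidean norm. *)

theory Defs
  imports "HOL-Analysis.Analysis"
begin

definition grad :: "('a::real_inner \<Rightarrow> real) \<Rightarrow> 'a \<Rightarrow> 'a" where
  "grad f x = (THE D. GDERIV f x :> D)"

definition unit_cube :: "(real ^ 'd) set" where
  "unit_cube = {x. \<forall>i. 0 \<le> x $ i \<and> x $ i \<le> 1}"

text \<open>The network x |-> W^T sigma(W x + c) + b, where the rows of W are w 0, ..., w (M-1).\<close>
definition mono_net ::
  "nat \<Rightarrow> (nat \<Rightarrow> real ^ 'd) \<Rightarrow> (nat \<Rightarrow> real) \<Rightarrow> real ^ 'd \<Rightarrow> (nat \<Rightarrow> real \<Rightarrow> real)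
     \<Rightarrow> real ^ 'd \<Rightarrow> real ^ 'd" where
  "mono_net M w c b \<sigma> x = (\<Sum>j<M. \<sigma> j (w j \<bullet> x + c j) *\<^sub>R w j) + b"

end

theory Submission
  imports Defs "HOL-Analysis.Interval_Integral"
begin

lemma grad_eqI:
  fixes f :: "'a::real_inner \<Rightarrow> real"
  assumes "GDERIV f x :> D" shows "grad f x = D"
  unfolding grad_def
proof (rule the_equality)
  show "GDERIV f x :> D" by fact
next
  fix D' assume "GDERIV f x :> D'"
  hence "(\<lambda>h. inner h D') = (\<lambda>h. inner h D)"
    using assms unfolding gderiv_def by (rule has_derivative_unique)
  hence "inner (D' - D) D' = inner (D' - D) D" by metis
  hence "inner (D' - D) (D' - D) = 0" by (simp add: inner_diff_right)
  thus "D' = D" by simp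
qed

lemma GDERIV_sum:
  assumes "finite S" "\<And>i. i \<in> S \<Longrightarrow> GDERIV (f i) x :> D i"
  shows "GDERIV (\<lambda>x. \<Sum>i\<in>S. f i x) x :> (\<Sum>i\<in>S. D i)"
  using assms
proof (induction S rule: finite_induct)
  case empty
  then show ?case by (simp add: GDERIV_const)
next
  case (insert j S)
  then show ?case by (simp add: GDERIV_add)
qed

lemma GDERIV_affine:
  fixes w :: "'a::real_inner"
  shows "GDERIV (\<lambda>x. w \<bullet> x + c) x :> w"
  unfolding gderiv_def
  by (auto intro!: derivative_eq_intros simp: inner_commute)

lemma GDERIV_comp_affine:
  fixes w :: "'a::real_inner"
  assumes "DERIV g (w \<bullet> x + c) :> d"
  shows "GDERIV (\<lambda>x. g (w \<bullet> x + c)) x :> d *\<^sub>R w"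
  by (rule GDERIV_DERIV_compose[OF GDERIV_affine assms])

lemma convex_on_affine_comp:
  fixes w :: "'a::real_inner"
  assumes "convex_on UNIV g"
  shows "convex_on UNIV (\<lambda>x. g (w \<bullet> x + c))"
proof (rule convex_onI)
  fix x y :: "'a" and t :: real
  assume t: "0 < t" "t < 1"
  have e: "w \<bullet> ((1 - t) *\<^sub>R x + t *\<^sub>R y) + c = (1 - t) *\<^sub>R (w \<bullet> x + c) + t *\<^sub>R (w \<bullet> y + c)"
    by (simp add: inner_add_right algebra_simps)
  show "g (w \<bullet> ((1 - t) *\<^sub>R x + t *\<^sub>R y) + c) \<le> (1 - t) * g (w \<bullet> x + c) + t * g (w \<bullet> y + c)"
    unfolding e using convex_onD[OF assms, of t] t by simp
qed simp

lemma convex_on_sum_fun: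
  assumes "finite S" "\<And>i. i \<in> S \<Longrightarrow> convex_on UNIV (f i)"
  shows "convex_on UNIV (\<lambda>x. \<Sum>i\<in>S. f i x)"
  using assms
proof (induction S rule: finite_induct)
  case empty
  then show ?case by (simp add: convex_on_const)
next
  case (insert j S)
  then show ?case by (simp add: convex_on_add)
qed

lemma antideriv_exists:
  fixes \<sigma> :: "real \<Rightarrow> real"
  assumes "continuous_on UNIV \<sigma>"
  shows "\<exists>S. \<forall>t. (S has_real_derivative \<sigma> t) (at t)"
proof -
  have "\<exists>F. \<forall>x :: real. (-\<infinity>::ereal) < x \<longrightarrow> x < (\<infinity>::ereal) \<longrightarrow> (F has_vector_derivative \<sigma> x) (at x)"
    by (rule einterval_antiderivative) (use assms in \<open>auto simp: continuous_on_eq_continuous_at\<close>)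
  then show ?thesis
    by (auto simp: has_real_derivative_iff_has_vector_derivative)
qed

lemma convex_deriv_mono:
  fixes \<psi> D :: "real \<Rightarrow> real"
  assumes cv: "convex_on UNIV \<psi>" and d: "\<And>t. (\<psi> has_real_derivative D t) (at t)"
  shows "mono D"
proof (rule monoI)
  fix x y :: real assume xy: "x \<le> y"
  have 1: "\<psi> y - \<psi> x \<ge> D x * (y - x)"
    by (rule convex_on_imp_above_tangent[OF cv]) (auto simp: d)
  have 2: "\<psi> x - \<psi> y \<ge> D y * (x - y)"
    by (rule convex_on_imp_above_tangent[OF cv]) (auto simp: d)
  show "D x \<le> D y"
  proof (cases "x = y")
    case False
    with xy have "y - x > 0" by simp
    moreover from 1 2 have "D x * (y - x) \<le> D y * (y - x)" by (simp add: algebra_simps)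
    ultimately show ?thesis by simp
  qed simp
qed

lemma unit_cube_cbox: "unit_cube = cbox (0::real^'d) 1"
  by (auto simp: unit_cube_def mem_box_cart)

theorem corollary2:
  fixes \<A> :: "(real \<Rightarrow> real) set"
    and N :: nat and a :: "nat \<Rightarrow> real ^ 'd" and bF :: "nat \<Rightarrow> real"
    and \<psi> :: "nat \<Rightarrow> real \<Rightarrow> real" and \<epsilon> :: real
  assumes A_cont: "\<forall>\<alpha>\<in>\<A>. continuous_on UNIV \<alpha>"
    and A_mono: "\<forall>\<alpha>\<in>\<A>. mono \<alpha>"
    and A_dense: "\<forall>K h \<eta>. compact K \<and> continuous_on K h \<and> mono_on K h \<and> \<eta> > 0 \<longrightarrow>
                    (\<exists>\<alpha>\<in>\<A>. \<forall>x\<in>K. \<bar>h x - \<alpha> x\<bar> < \<eta>)"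
    and psi_C1: "\<forall>i<N. \<psi> i C1_differentiable_on UNIV"
    and psi_convex: "\<forall>i<N. convex_on UNIV (\<psi> i)"
    and eps: "\<epsilon> > 0"
  defines "F \<equiv> (\<lambda>x::real ^ 'd. \<Sum>i<N. \<psi> i (a i \<bullet> x + bF i))"
  shows "(\<exists>M w c b \<sigma>. M \<ge> 1 \<and> (\<forall>j<M. \<sigma> j \<in> \<A>) \<and>
            (SUP x\<in>unit_cube. norm (grad F x - mono_net M w c b \<sigma> x)) < \<epsilon>)
       \<and> (\<forall>M w c b \<sigma>. (\<forall>j<M. \<sigma> j \<in> \<A>) \<longrightarrow>
            (\<exists>\<Phi>::real ^ 'd \<Rightarrow> real. convex_on UNIV \<Phi> \<and>
               (\<forall>x. GDERIV \<Phi> x :> mono_net M w c b \<sigma> x)))"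
proof
  show "\<forall>M w c b \<sigma>. (\<forall>j<M. \<sigma> j \<in> \<A>) \<longrightarrow>
            (\<exists>\<Phi>::real ^ 'd \<Rightarrow> real. convex_on UNIV \<Phi> \<and>
               (\<forall>x. GDERIV \<Phi> x :> mono_net M w c b \<sigma> x))"
  proof (intro allI impI)
    fix M :: nat and w :: "nat \<Rightarrow> real^'d" and c :: "nat \<Rightarrow> real" and b :: "real^'d" and \<sigma> :: "nat \<Rightarrow> real \<Rightarrow> real"
    assume sA: "\<forall>j<M. \<sigma> j \<in> \<A>"
    have "\<forall>j. \<exists>S. j < M \<longrightarrow> (\<forall>t. (S has_real_derivative \<sigma> j t) (at t))"
      using antideriv_exists sA A_cont by blast
    then obtain S where S: "\<And>j t. j < M \<Longrightarrow> (S j has_real_derivative \<sigma> j t) (at t)"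
      by metis
    define \<Phi> where "\<Phi> = (\<lambda>x::real^'d. (\<Sum>j<M. S j (w j \<bullet> x + c j)) + (b \<bullet> x + 0))"
    have cS: "convex_on UNIV (S j)" if "j < M" for j
    proof (rule convex_on_realI[where f'="\<sigma> j"])
      have "mono (\<sigma> j)" using sA A_mono that by blast
      thus "\<And>x y. x \<in> UNIV \<Longrightarrow> y \<in> UNIV \<Longrightarrow> x \<le> y \<Longrightarrow> \<sigma> j x \<le> \<sigma> j y"
        by (simp add: monoD)
    qed (auto intro: S[OF that])
    have c1: "convex_on UNIV (\<lambda>x::real^'d. \<Sum>j<M. S j (w j \<bullet> x + c j))"
      by (intro convex_on_sum_fun convex_on_affine_comp cS) auto
    have c2: "convex_on UNIV (\<lambda>x::real^'d. id (b \<bullet> x + 0))"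
      by (rule convex_on_affine_comp) (simp add: id_def convex_on_ident)
    have "convex_on UNIV \<Phi>"
      unfolding \<Phi>_def using convex_on_add[OF c1 c2] by simp
    moreover have "GDERIV \<Phi> x :> mono_net M w c b \<sigma> x" for x
    proof -
      have "GDERIV (\<lambda>x. \<Sum>j<M. S j (w j \<bullet> x + c j)) x :> (\<Sum>j<M. \<sigma> j (w j \<bullet> x + c j) *\<^sub>R w j)"
        by (rule GDERIV_sum) (auto intro!: GDERIV_comp_affine S)
      from GDERIV_add[OF this GDERIV_affine[of b 0 x]]
      show ?thesis unfolding \<Phi>_def mono_net_def .
    qed
    ultimately show "\<exists>\<Phi>::real ^ 'd \<Rightarrow> real. convex_on UNIV \<Phi> \<and>
               (\<forall>x. GDERIV \<Phi> x :> mono_net M w c b \<sigma> x)" by blast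
  qed
next
  have "\<forall>i. \<exists>Di. i < N \<longrightarrow> (\<forall>t. (\<psi> i has_real_derivative Di t) (at t)) \<and> continuous_on UNIV Di"
    using psi_C1 by (auto simp: C1_differentiable_on_def has_real_derivative_iff_has_vector_derivative)
  then obtain D where D: "\<And>i t. i < N \<Longrightarrow> (\<psi> i has_real_derivative D i t) (at t)"
    and Dc: "\<And>i. i < N \<Longrightarrow> continuous_on UNIV (D i)"
    by metis
  have Dm: "mono (D i)" if "i < N" for i
    using convex_deriv_mono[OF _ D] psi_convex that by blast
  have gradF: "grad F x = (\<Sum>i<N. D i (a i \<bullet> x + bF i) *\<^sub>R a i)" for x
    unfolding F_def
    by (intro grad_eqI GDERIV_sum GDERIV_comp_affine D) auto
  obtain \<alpha>0 where a0: "\<alpha>0 \<in> \<A>"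
    using A_dense[rule_format, of "{}" "\<lambda>x. x" 1] by auto
  define B where "B = (\<Sum>i<N. norm (a i)) + 1"
  have B0: "B > 0" unfolding B_def by (simp add: add_nonneg_pos sum_nonneg)
  define \<eta> where "\<eta> = \<epsilon> / (2 * B)"
  have \<eta>0: "\<eta> > 0" unfolding \<eta>_def using eps B0 by simp
  have cube: "compact (unit_cube :: (real^'d) set)" by (simp add: unit_cube_cbox)
  have "\<forall>i\<in>{..<N}. \<exists>\<alpha>. \<alpha> \<in> \<A> \<and> (\<forall>x\<in>unit_cube. \<bar>D i (a i \<bullet> x + bF i) - \<alpha> (a i \<bullet> x + bF i)\<bar> < \<eta>)"
  proof
    fix i assume "i \<in> {..<N}"
    hence i: "i < N" by simp
    let ?K = "(\<lambda>x. a i \<bullet> x + bF i) ` (unit_cube :: (real^'d) set)"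
    have "compact ?K"
      by (intro compact_continuous_image cube) (auto intro!: continuous_intros)
    moreover have "continuous_on ?K (D i)" using Dc[OF i] by (rule continuous_on_subset) simp
    moreover have "mono_on ?K (D i)" using Dm[OF i] by (simp add: mono_on_def monoD)
    ultimately obtain \<alpha> where "\<alpha> \<in> \<A>" "\<forall>t\<in>?K. \<bar>D i t - \<alpha> t\<bar> < \<eta>"
      using A_dense \<eta>0 by blast
    thus "\<exists>\<alpha>. \<alpha> \<in> \<A> \<and> (\<forall>x\<in>unit_cube. \<bar>D i (a i \<bullet> x + bF i) - \<alpha> (a i \<bullet> x + bF i)\<bar> < \<eta>)"
      by blast
  qed
  then obtain \<alpha> where "\<forall>i\<in>{..<N}. \<alpha> i \<in> \<A> \<and> (\<forall>x\<in>unit_cube. \<bar>D i (a i \<bullet> x + bF i) - \<alpha> i (a i \<bullet> x + bF i)\<bar> < \<eta>)"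
    by (rule bchoice[elim_format]) blast
  then obtain \<alpha> where \<alpha>A: "\<And>i. i < N \<Longrightarrow> \<alpha> i \<in> \<A>"
    and \<alpha>a: "\<And>i x. i < N \<Longrightarrow> x \<in> unit_cube \<Longrightarrow> \<bar>D i (a i \<bullet> x + bF i) - \<alpha> i (a i \<bullet> x + bF i)\<bar> < \<eta>"
    by (metis lessThan_iff)
  define \<sigma> where "\<sigma> = (\<lambda>j. if j < N then \<alpha> j else \<alpha>0)"
  define w where "w = (\<lambda>j. if j < N then a j else 0)"
  define c where "c = (\<lambda>j. if j < N then bF j else 0)"
  have bound: "norm (grad F x - mono_net (Suc N) w c 0 \<sigma> x) \<le> \<epsilon> / 2" if x: "x \<in> unit_cube" for x
  proof -
    have "mono_net (Suc N) w c 0 \<sigma> x = (\<Sum>i<N. \<alpha> i (a i \<bullet> x + bF i) *\<^sub>R a i)"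
      unfolding mono_net_def by (simp add: w_def c_def \<sigma>_def)
    hence "grad F x - mono_net (Suc N) w c 0 \<sigma> x
        = (\<Sum>i<N. (D i (a i \<bullet> x + bF i) - \<alpha> i (a i \<bullet> x + bF i)) *\<^sub>R a i)"
      by (simp add: gradF scaleR_diff_left sum_subtractf)
    also have "norm \<dots> \<le> (\<Sum>i<N. norm ((D i (a i \<bullet> x + bF i) - \<alpha> i (a i \<bullet> x + bF i)) *\<^sub>R a i))"
      by (rule norm_sum)
    also have "\<dots> \<le> (\<Sum>i<N. \<eta> * norm (a i))"
    proof (rule sum_mono)
      fix i assume "i \<in> {..<N}"
      hence "\<bar>D i (a i \<bullet> x + bF i) - \<alpha> i (a i \<bullet> x + bF i)\<bar> \<le> \<eta>" using \<alpha>a x by (simp add: less_imp_le)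
      thus "norm ((D i (a i \<bullet> x + bF i) - \<alpha> i (a i \<bullet> x + bF i)) *\<^sub>R a i) \<le> \<eta> * norm (a i)"
        by (simp add: mult_right_mono)
    qed
    also have "\<dots> = \<eta> * (B - 1)" by (simp add: B_def sum_distrib_left)
    also have "\<dots> \<le> \<eta> * B" using \<eta>0 by simp
    also have "\<dots> = \<epsilon> / 2" unfolding \<eta>_def using B0 by simp
    finally show ?thesis .
  qed
  have ne: "(0::real^'d) \<in> unit_cube" by (simp add: unit_cube_def)
  have "(SUP x\<in>unit_cube. norm (grad F x - mono_net (Suc N) w c 0 \<sigma> x)) \<le> \<epsilon> / 2"
    using ne bound by (intro cSUP_least) auto
  also have "\<dots> < \<epsilon>" using eps by simp
  finally have "(SUP x\<in>unit_cube. norm (grad F x - mono_net (Suc N) w c 0 \<sigma> x)) < \<epsilon>" .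
  moreover have "\<forall>j<Suc N. \<sigma> j \<in> \<A>" using \<alpha>A a0 by (simp add: \<sigma>_def)
  ultimately show "\<exists>M w c b \<sigma>. M \<ge> 1 \<and> (\<forall>j<M. \<sigma> j \<in> \<A>) \<and>
            (SUP x\<in>unit_cube. norm (grad F x - mono_net M w c b \<sigma> x)) < \<epsilon>"
    by (intro exI[of _ "Suc N"] exI[of _ w] exI[of _ c] exI[of _ 0] exI[of _ \<sigma>]) simp
qed

end
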